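(* Let $\pi$ be a $\mathtt{TPDL}$ program and $\Gamma,\Delta,\Pi,\Sigma$ finite sets of $\mathtt{TPDL}$ formulas. Then $\Gamma\Rightarrow\Delta,[\pi]^{\leftarrow}\chi(\Pi\Rightarrow\Sigma)$ is provable in $\mathtt{GTPDL}$ if and only if $\Pi\Rightarrow\Sigma,[\pi]\chi(\Gamma\Rightarrow\Delta)$ is provable in $\mathtt{GTPDL}$.
   Context: $\mathtt{TPDL}$ formulas/programs over sets $\mathsf{Prop}$, $\mathsf{AtProg}$: $\varphi ::= \bot \mid p \mid (\varphi\to\varphi) \mid [\pi]\varphi \mid [\pi]^{\leftarrow}\varphi$, $\pi ::= \alpha \mid \pi;\pi \mid \pi\cup\pi \mid \pi^{*} \mid \varphi?$. Abbreviations: $\neg\varphi:=\varphi\to\bot$, $\varphi\lor\psi:=(\varphi\to\bot)\to\psi$, $\varphi\land\psi:=(\varphi\to(\psi\to\bot))\to\bot$. For a finite set $\Lambda=\{\varphi_0,\dots,\varphi_n\}$ (in a fixed enumeration), $\bigwedge\Lambda=(\cdots(\varphi_0\land\varphi_1)\land\cdots\land\varphi_n)$, $\bigvee\Lambda=(\cdots(\varphi_0\lor\varphi_1)\lor\cdots\lor\varphi_n)$, $\bigwedge\emptyset=\bot\to\bot$, $\bigvee\emptyset=\bot$. For a sequent, $\chi(\Gamma\Rightarrow\Delta):=\bigwedge\Gamma\to\bigvee\Delta$. $[\pi]\Gamma=\{[\pi]\varphi:\varphi\in\Gamma\}$, similarly $[\pi]^{\leftarrow}\Gamma$. A sequent is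 a pair of finite sets of formulas. $\mathtt{GTPDL}$ rules (premises / conclusion): (Ax) / $\Gamma\Rightarrow\Delta$, $\Gamma\cap\Delta\neq\emptyset$; ($\bot$) / $\Gamma,\bot\Rightarrow\Delta$; ($\to$L) $\Gamma\Rightarrow\varphi,\Delta$ and $\Gamma,\psi\Rightarrow\Delta$ / $\Gamma,\varphi\to\psi\Rightarrow\Delta$; ($\to$R) $\Gamma,\varphi\Rightarrow\psi,\Delta$ / $\Gamma\Rightarrow\varphi\to\psi,\Delta$; (Wk) $\Gamma\Rightarrow\Delta$ / $\Gamma'\Rightarrow\Delta'$, $\Gamma\subseteq\Gamma'$, $\Delta\subseteq\Delta'$; (Cut) $\Gamma\Rightarrow\varphi,\Delta$ and $\Gamma,\varphi\Rightarrow\Delta$ / $\Gamma\Rightarrow\Delta$; ($[\,]$) $\Gamma\Rightarrow\varphi,[\pi]^{\leftarrow}\Delta$ / $[\pi]\Gamma\Rightarrow[\pi]\varphi,\Delta$; ($[\,]^{\leftarrow}$) $\Gamma\Rightarrow\varphi,[\pi]\Delta$ / $[\pi]^{\leftarrow}\Gamma\Rightarrow[\pi]^{\leftarrow}\varphi,\Delta$; ($[;]$L) $\Gamma,[\pi_0][\pi_1]\varphi\Rightarrow\Delta$ / $\Gamma,[\pi_0;\pi_1]\varphi\Rightarrow\Delta$; ($[;]$R) $\Gamma\Rightarrow[\pi_0][\pi_1]\varphi,\Delta$ / $\Gamma\Rightarrow[\pi_0;\pi_1]\varphi,\Delta$; ($[\cup]$L) $\Gamma,[\pi_0]\varphi,[\pi_1]\varphi\Rightarrow\Delta$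 / $\Gamma,[\pi_0\cup\pi_1]\varphi\Rightarrow\Delta$; ($[\cup]$R) $\Gamma\Rightarrow\Delta,[\pi_0]\varphi$ and $\Gamma\Rightarrow\Delta,[\pi_1]\varphi$ / $\Gamma\Rightarrow[\pi_0\cup\pi_1]\varphi,\Delta$; ($[*]$L) $\Gamma,\varphi,[\pi][\pi^*]\varphi\Rightarrow\Delta$ / $\Gamma,[\pi^*]\varphi\Rightarrow\Delta$; ($[*]$R) $\Gamma,\varphi\Rightarrow[\pi]\varphi$ / $[\pi^*]\Gamma,\varphi\Rightarrow[\pi^*]\varphi$; ($[?]$L) $\Gamma\Rightarrow\varphi,\Delta$ and $\Gamma,\psi\Rightarrow\Delta$ / $\Gamma,[\varphi?]\psi\Rightarrow\Delta$; ($[?]$R) $\Gamma,\varphi\Rightarrow\psi,\Delta$ / $\Gamma\Rightarrow[\varphi?]\psi,\Delta$. A $\mathtt{GTPDL}$ proof is a finite tree of sequents, each node the conclusion of a rule instance whose premises are its children (leaves are Ax/$\bot$ instances). *)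

theory Defs
  imports Main "HOL-Library.FSet"
begin

datatype ('p, 'a) fm =
    Bot
  | Atom 'p
  | Imp "('p, 'a) fm" "('p, 'a) fm"
  | Box "('p, 'a) prog" "('p, 'a) fm"
  | BoxC "('p, 'a) prog" "('p, 'a) fm"   (* converse box [pi]^{<-} *)
and ('p, 'a) prog =
    At 'a
  | Seq "('p, 'a) prog" "('p, 'a) prog"
  | Choice "('p, 'a) prog" "('p, 'a) prog"
  | Star "('p, 'a) prog"
  | Test "('p, 'a) fm"

definition Neg :: "('p,'a) fm \<Rightarrow> ('p,'a) fm" where
  "Neg \<phi> = Imp \<phi> Bot"
definition Or :: "('p,'a) fm \<Rightarrow> ('p,'a) fm \<Rightarrow> ('p,'a) fm" where
  "Or \<phi> \<psi> = Imp (Imp \<phi> Bot) \<psi>"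
definition And :: "('p,'a) fm \<Rightarrow> ('p,'a) fm \<Rightarrow> ('p,'a) fm" where
  "And \<phi> \<psi> = Imp (Imp \<phi> (Imp \<psi> Bot)) Bot"

definition enum :: "('p,'a) fm fset \<Rightarrow> ('p,'a) fm list" where
  "enum A = (SOME xs. fset_of_list xs = A \<and> distinct xs)"

fun bigAnd_list :: "('p,'a) fm list \<Rightarrow> ('p,'a) fm" where
  "bigAnd_list [] = Imp Bot Bot"
| "bigAnd_list (x # xs) = foldl And x xs"

fun bigOr_list :: "('p,'a) fm list \<Rightarrow> ('p,'a) fm" where
  "bigOr_list [] = Bot"
| "bigOr_list (x # xs) = foldl Or x xs"

definition bigAnd :: "('p,'a) fm fset \<Rightarrow> ('p,'a) fm" where
  "bigAnd A = bigAnd_list (enum A)"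
definition bigOr :: "('p,'a) fm fset \<Rightarrow> ('p,'a) fm" where
  "bigOr A = bigOr_list (enum A)"

definition chi :: "('p,'a) fm fset \<Rightarrow> ('p,'a) fm fset \<Rightarrow> ('p,'a) fm" where
  "chi \<Gamma> \<Delta> = Imp (bigAnd \<Gamma>) (bigOr \<Delta>)"

inductive gtpdl :: "('p,'a) fm fset \<Rightarrow> ('p,'a) fm fset \<Rightarrow> bool" where
  Ax: "\<Gamma> |\<inter>| \<Delta> \<noteq> {||} \<Longrightarrow> gtpdl \<Gamma> \<Delta>"
| BotL: "gtpdl (finsert Bot \<Gamma>) \<Delta>"
| ImpL: "gtpdl \<Gamma> (finsert \<phi> \<Delta>) \<Longrightarrow> gtpdl (finsert \<psi> \<Gamma>) \<Delta>
         \<Longrightarrow> gtpdl (finsert (Imp \<phi> \<psi>) \<Gamma>) \<Delta>"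
| ImpR: "gtpdl (finsert \<phi> \<Gamma>) (finsert \<psi> \<Delta>) \<Longrightarrow> gtpdl \<Gamma> (finsert (Imp \<phi> \<psi>) \<Delta>)"
| Wk: "gtpdl \<Gamma> \<Delta> \<Longrightarrow> \<Gamma> |\<subseteq>| \<Gamma>' \<Longrightarrow> \<Delta> |\<subseteq>| \<Delta>' \<Longrightarrow> gtpdl \<Gamma>' \<Delta>'"
| Cut: "gtpdl \<Gamma> (finsert \<phi> \<Delta>) \<Longrightarrow> gtpdl (finsert \<phi> \<Gamma>) \<Delta> \<Longrightarrow> gtpdl \<Gamma> \<Delta>"
| BoxRule: "gtpdl \<Gamma> (finsert \<phi> (BoxC \<pi> |`| \<Delta>))
         \<Longrightarrow> gtpdl (Box \<pi> |`| \<Gamma>) (finsert (Box \<pi> \<phi>) \<Delta>)"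
| BoxCRule: "gtpdl \<Gamma> (finsert \<phi> (Box \<pi> |`| \<Delta>))
         \<Longrightarrow> gtpdl (BoxC \<pi> |`| \<Gamma>) (finsert (BoxC \<pi> \<phi>) \<Delta>)"
| SeqL: "gtpdl (finsert (Box \<pi>0 (Box \<pi>1 \<phi>)) \<Gamma>) \<Delta>
         \<Longrightarrow> gtpdl (finsert (Box (Seq \<pi>0 \<pi>1) \<phi>) \<Gamma>) \<Delta>"
| SeqR: "gtpdl \<Gamma> (finsert (Box \<pi>0 (Box \<pi>1 \<phi>)) \<Delta>)
         \<Longrightarrow> gtpdl \<Gamma> (finsert (Box (Seq \<pi>0 \<pi>1) \<phi>) \<Delta>)"
| ChoiceL: "gtpdl (finsert (Box \<pi>0 \<phi>) (finsert (Box \<pi>1 \<phi>) \<Gamma>)) \<Delta>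
         \<Longrightarrow> gtpdl (finsert (Box (Choice \<pi>0 \<pi>1) \<phi>) \<Gamma>) \<Delta>"
| ChoiceR: "gtpdl \<Gamma> (finsert (Box \<pi>0 \<phi>) \<Delta>) \<Longrightarrow> gtpdl \<Gamma> (finsert (Box \<pi>1 \<phi>) \<Delta>)
         \<Longrightarrow> gtpdl \<Gamma> (finsert (Box (Choice \<pi>0 \<pi>1) \<phi>) \<Delta>)"
| StarL: "gtpdl (finsert \<phi> (finsert (Box \<pi> (Box (Star \<pi>) \<phi>)) \<Gamma>)) \<Delta>
         \<Longrightarrow> gtpdl (finsert (Box (Star \<pi>) \<phi>) \<Gamma>) \<Delta>"
| StarR: "gtpdl (finsert \<phi> \<Gamma>) {|Box \<pi> \<phi>|}
         \<Longrightarrow> gtpdl (finsert \<phi> (Box (Star \<pi>) |`| \<Gamma>)) {|Box (Star \<pi>) \<phi>|}"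
| TestL: "gtpdl \<Gamma> (finsert \<phi> \<Delta>) \<Longrightarrow> gtpdl (finsert \<psi> \<Gamma>) \<Delta>
         \<Longrightarrow> gtpdl (finsert (Box (Test \<phi>) \<psi>) \<Gamma>) \<Delta>"
| TestR: "gtpdl (finsert \<phi> \<Gamma>) (finsert \<psi> \<Delta>)
         \<Longrightarrow> gtpdl \<Gamma> (finsert (Box (Test \<phi>) \<psi>) \<Delta>)"

end

theory Submission
  imports Defs
begin

lemma ax: "x |\<in>| \<Gamma> \<Longrightarrow> x |\<in>| \<Delta> \<Longrightarrow> gtpdl \<Gamma> \<Delta>"
  by (rule Ax) auto

lemma wk: "gtpdl \<Gamma> \<Delta> \<Longrightarrow> \<Gamma> |\<subseteq>| \<Gamma>' \<Longrightarrow> \<Delta> |\<subseteq>| \<Delta>' \<Longrightarrow> gtpdl \<Gamma>' \<Delta>'"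
  by (rule Wk)

lemma impR': "gtpdl (finsert \<phi> \<Gamma>) (finsert \<psi> \<Delta>) \<Longrightarrow> Imp \<phi> \<psi> |\<in>| \<Delta>' \<Longrightarrow> \<Delta> |\<subseteq>| \<Delta>'
   \<Longrightarrow> gtpdl \<Gamma> \<Delta>'"
  by (rule wk[OF ImpR]) auto

lemma impL': "gtpdl \<Gamma> (finsert \<phi> \<Delta>) \<Longrightarrow> gtpdl (finsert \<psi> \<Gamma>) \<Delta> \<Longrightarrow> Imp \<phi> \<psi> |\<in>| \<Gamma>'
   \<Longrightarrow> \<Gamma> |\<subseteq>| \<Gamma>' \<Longrightarrow> gtpdl \<Gamma>' \<Delta>"
  by (rule wk[OF ImpL]) auto

lemma botL': "Bot |\<in>| \<Gamma> \<Longrightarrow> gtpdl \<Gamma> \<Delta>"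
  by (rule wk[OF BotL[of "{||}" \<Delta>]]) auto

lemma trans1: "gtpdl {|A|} {|B|} \<Longrightarrow> gtpdl {|B|} {|C|} \<Longrightarrow> gtpdl {|A|} {|C|}"
proof -
  assume h1: "gtpdl {|A|} {|B|}" and h2: "gtpdl {|B|} {|C|}"
  have a: "gtpdl {|A|} (finsert B {|C|})" by (rule wk[OF h1]) auto
  have b: "gtpdl (finsert B {|A|}) {|C|}" by (rule wk[OF h2]) auto
  show ?thesis by (rule Cut[OF a b])
qed

lemma cutL: "gtpdl (\<Gamma> |\<union>| X) \<Delta> \<Longrightarrow> (\<And>x. x |\<in>| X \<Longrightarrow> gtpdl \<Gamma> (finsert x \<Delta>)) \<Longrightarrow> gtpdl \<Gamma> \<Delta>"
proof (induction X arbitrary: \<Gamma>)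
  case empty
  then show ?case by simp
next
  case (insert x X)
  have "gtpdl (finsert x \<Gamma>) \<Delta>"
  proof (rule insert.IH)
    show "gtpdl (finsert x \<Gamma> |\<union>| X) \<Delta>" using insert.prems(1) by simp
    fix y assume "y |\<in>| X"
    then have "gtpdl \<Gamma> (finsert y \<Delta>)" using insert.prems(2) by simp
    then show "gtpdl (finsert x \<Gamma>) (finsert y \<Delta>)" by (rule wk) auto
  qed
  then show ?case using insert.prems(2)[of x] by (meson Cut finsertI1)
qed

lemma cutR: "gtpdl \<Gamma> (\<Delta> |\<union>| Y) \<Longrightarrow> (\<And>y. y |\<in>| Y \<Longrightarrow> gtpdl (finsert y \<Gamma>) \<Delta>) \<Longrightarrow> gtpdl \<Gamma> \<Delta>"
proof (induction Y arbitrary: \<Delta>)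
  case empty
  then show ?case by simp
next
  case (insert x Y)
  have "gtpdl \<Gamma> (finsert x \<Delta>)"
  proof (rule insert.IH)
    show "gtpdl \<Gamma> (finsert x \<Delta> |\<union>| Y)" using insert.prems(1) by simp
    fix y assume "y |\<in>| Y"
    then have "gtpdl (finsert y \<Gamma>) \<Delta>" using insert.prems(2) by simp
    then show "gtpdl (finsert y \<Gamma>) (finsert x \<Delta>)" by (rule wk) auto
  qed
  then show ?case using insert.prems(2)[of x] by (meson Cut finsertI1)
qed

lemma and1: "gtpdl {|And a x|} {|a|}"
proof -
  have "gtpdl {|a|} {|Imp x Bot, a|}" by (rule ax[of a]) auto
  then have "gtpdl {||} {|Imp a (Imp x Bot), a|}"
    by (rule impR'[where \<Delta>="{|a|}"]) auto
  moreover have "gtpdl {|Bot|} {|a|}" by (rule botL') auto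
  ultimately show ?thesis unfolding And_def
    by (rule impL'[where \<Gamma>="{||}" and \<phi>="Imp a (Imp x Bot)" and \<psi>=Bot]) auto
qed

lemma and2: "gtpdl {|And a x|} {|x|}"
proof -
  have "gtpdl {|x, a|} {|Bot, x|}" by (rule ax[of x]) auto
  then have "gtpdl {|a|} {|Imp x Bot, x|}"
    by (rule impR'[where \<Delta>="{|x|}"]) auto
  then have "gtpdl {||} {|Imp a (Imp x Bot), x|}"
    by (rule impR'[where \<Delta>="{|x|}"]) auto
  moreover have "gtpdl {|Bot|} {|x|}" by (rule botL') auto
  ultimately show ?thesis unfolding And_def
    by (rule impL'[where \<Gamma>="{||}" and \<phi>="Imp a (Imp x Bot)" and \<psi>=Bot]) auto
qed

lemma and3: "gtpdl {|a, x|} {|And a x|}"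
proof -
  have 1: "gtpdl {|a, x|} {|a, Bot|}" by (rule ax[of a]) auto
  have 2: "gtpdl {|Imp x Bot, a, x|} {|Bot|}"
  proof (rule impL'[where \<Gamma>="{|a, x|}" and \<phi>=x and \<psi>=Bot])
    show "gtpdl {|a, x|} (finsert x {|Bot|})" by (rule ax[of x]) auto
    show "gtpdl (finsert Bot {|a, x|}) {|Bot|}" by (rule botL') auto
  qed auto
  have "gtpdl {|Imp a (Imp x Bot), a, x|} {|Bot|}"
    by (rule impL'[where \<Gamma>="{|a, x|}" and \<phi>=a and \<psi>="Imp x Bot"]) (use 1 2 in auto)
  then show ?thesis unfolding And_def
    by (rule impR'[where \<Delta>="{||}"]) auto
qed

lemma or1: "gtpdl {|a|} {|Or a x|}"
proof -
  have "gtpdl {|Imp a Bot, a|} {|x|}"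
  proof (rule impL'[where \<Gamma>="{|a|}" and \<phi>=a and \<psi>=Bot])
    show "gtpdl {|a|} (finsert a {|x|})" by (rule ax[of a]) auto
    show "gtpdl (finsert Bot {|a|}) {|x|}" by (rule botL') auto
  qed auto
  then show ?thesis unfolding Or_def
    by (rule impR'[where \<Delta>="{||}"]) auto
qed

lemma or2: "gtpdl {|x|} {|Or a x|}"
proof -
  have "gtpdl {|Imp a Bot, x|} {|x|}" by (rule ax[of x]) auto
  then show ?thesis unfolding Or_def
    by (rule impR'[where \<Delta>="{||}"]) auto
qed

lemma or3: "gtpdl {|Or a x|} {|a, x|}"
proof -
  have "gtpdl {|a|} {|Bot, a, x|}" by (rule ax[of a]) auto
  then have 1: "gtpdl {||} {|Imp a Bot, a, x|}"
    by (rule impR'[where \<Delta>="{|a, x|}"]) auto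
  have 2: "gtpdl {|x|} {|a, x|}" by (rule ax[of x]) auto
  show ?thesis unfolding Or_def
    by (rule impL'[where \<Gamma>="{||}" and \<phi>="Imp a Bot" and \<psi>=x]) (use 1 2 in auto)
qed

lemma foldAnd1: "y \<in> set (a # xs) \<Longrightarrow> gtpdl {|foldl And a xs|} {|y|}"
proof (induction xs arbitrary: a y)
  case Nil
  then show ?case by (auto intro: ax)
next
  case (Cons x xs)
  have IH: "\<And>y. y \<in> set (And a x # xs) \<Longrightarrow> gtpdl {|foldl And (And a x) xs|} {|y|}"
    using Cons.IH by blast
  show ?case
  proof (cases "y \<in> set xs")
    case True then show ?thesis using IH by simp
  next
    case False
    then have "y = a \<or> y = x" using Cons.prems by auto
    moreover have "gtpdl {|foldl And a (x # xs)|} {|And a x|}" using IH[of "And a x"] by simp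
    ultimately show ?thesis using trans1 and1[of a x] and2[of a x] by auto
  qed
qed

lemma foldAnd2: "gtpdl (fset_of_list (a # xs)) {|foldl And a xs|}"
proof (induction xs arbitrary: a)
  case Nil
  then show ?case by (auto intro: ax)
next
  case (Cons x xs)
  have IH: "gtpdl (fset_of_list (And a x # xs)) {|foldl And (And a x) xs|}"
    using Cons.IH by blast
  show ?case
    apply simp
    apply (rule Cut[where \<phi>="And a x"])
     apply (rule wk[OF and3]; auto)
    apply (rule wk[OF IH]; auto)
    done
qed

lemma foldOr1: "y \<in> set (a # xs) \<Longrightarrow> gtpdl {|y|} {|foldl Or a xs|}"
proof (induction xs arbitrary: a y)
  case Nil
  then show ?case by (auto intro: ax)
next
  case (Cons x xs)
  have IH: "\<And>y. y \<in> set (Or a x # xs) \<Longrightarrow> gtpdl {|y|} {|foldl Or (Or a x) xs|}"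
    using Cons.IH by blast
  show ?case
  proof (cases "y \<in> set xs")
    case True then show ?thesis using IH by simp
  next
    case False
    then have "y = a \<or> y = x" using Cons.prems by auto
    moreover have "gtpdl {|Or a x|} {|foldl Or a (x # xs)|}" using IH[of "Or a x"] by simp
    ultimately show ?thesis using trans1 or1[of a x] or2[of x a] by auto
  qed
qed

lemma foldOr2: "gtpdl {|foldl Or a xs|} (fset_of_list (a # xs))"
proof (induction xs arbitrary: a)
  case Nil
  then show ?case by (auto intro: ax)
next
  case (Cons x xs)
  have IH: "gtpdl {|foldl Or (Or a x) xs|} (fset_of_list (Or a x # xs))"
    using Cons.IH by blast
  show ?case
    apply simp
  proof (rule Cut[where \<phi>="Or a x"])
    show "gtpdl {|foldl Or (Or a x) xs|} (finsert (Or a x) (finsert a (finsert x (fset_of_list xs))))"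
      by (rule wk[OF IH]) auto
    show "gtpdl (finsert (Or a x) {|foldl Or (Or a x) xs|}) (finsert a (finsert x (fset_of_list xs)))"
      by (rule wk[OF or3]) auto
  qed
qed

lemma enum_set: "fset_of_list (enum A) = A"
proof -
  have "\<exists>xs. set xs = fset A \<and> distinct xs"
    by (rule finite_distinct_list) simp
  then obtain xs where "set xs = fset A" "distinct xs"
    by (elim exE conjE)
  then have "fset_of_list xs = A \<and> distinct xs"
    by (metis fset_inverse fset_of_list.abs_eq)
  then show ?thesis unfolding enum_def by (rule someI2) auto
qed

lemma bigAnd1: "y |\<in>| A \<Longrightarrow> gtpdl {|bigAnd A|} {|y|}"
  unfolding bigAnd_def
  using enum_set[of A] foldAnd1
  by (cases "enum A") (auto simp: fset_of_list_elem)

lemma bigAnd2: "gtpdl A {|bigAnd A|}"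
  unfolding bigAnd_def
proof (cases "enum A")
  case Nil
  then show "gtpdl A {|bigAnd_list (enum A)|}"
  proof -
    have "gtpdl (finsert Bot A) {|Bot|}" by (rule ax[of Bot]) auto
    then have "gtpdl A {|Imp Bot Bot|}" by (rule impR'[where \<Delta>="{||}"]) auto
    then show ?thesis using Nil by simp
  qed
next
  case (Cons a xs)
  then show "gtpdl A {|bigAnd_list (enum A)|}"
    using foldAnd2[of a xs] enum_set[of A] by simp
qed

lemma bigOr1: "y |\<in>| A \<Longrightarrow> gtpdl {|y|} {|bigOr A|}"
  unfolding bigOr_def
  using enum_set[of A] foldOr1
  by (cases "enum A") (auto simp: fset_of_list_elem)

lemma bigOr2: "gtpdl {|bigOr A|} A"
  unfolding bigOr_def
proof (cases "enum A")
  case Nil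
  then show "gtpdl {|bigOr_list (enum A)|} A"
    by (auto intro!: botL')
next
  case (Cons a xs)
  then show "gtpdl {|bigOr_list (enum A)|} A"
    using foldOr2[of a xs] enum_set[of A] by simp
qed

lemma chiL: "gtpdl (finsert (chi \<Gamma> \<Delta>) \<Gamma>) \<Delta>"
  unfolding chi_def
  apply (rule ImpL)
   apply (rule wk[OF bigAnd2]; auto)
  apply (rule wk[OF bigOr2]; auto)
  done

lemma chiR: "gtpdl \<Gamma> (finsert C \<Delta>) \<Longrightarrow> gtpdl {||} {|chi \<Gamma> \<Delta>, C|}"
proof -
  assume h: "gtpdl \<Gamma> (finsert C \<Delta>)"
  have "gtpdl {|bigAnd \<Gamma>|} {|bigOr \<Delta>, C|}"
  proof (rule cutL[where X=\<Gamma>])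
    show "gtpdl ({|bigAnd \<Gamma>|} |\<union>| \<Gamma>) {|bigOr \<Delta>, C|}"
    proof (rule cutR[where Y=\<Delta>])
      show "gtpdl ({|bigAnd \<Gamma>|} |\<union>| \<Gamma>) ({|bigOr \<Delta>, C|} |\<union>| \<Delta>)"
        by (rule wk[OF h]) auto
      fix y assume "y |\<in>| \<Delta>"
      then show "gtpdl (finsert y ({|bigAnd \<Gamma>|} |\<union>| \<Gamma>)) {|bigOr \<Delta>, C|}"
        by (rule wk[OF bigOr1]) auto
    qed
    fix x assume "x |\<in>| \<Gamma>"
    then show "gtpdl {|bigAnd \<Gamma>|} (finsert x {|bigOr \<Delta>, C|})"
      by (rule wk[OF bigAnd1]) auto
  qed
  then show ?thesis unfolding chi_def
    by (rule impR'[where \<Delta>="{|C|}"]) auto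
qed

theorem mainTheorem14:
  fixes \<pi> :: "('p,'a) prog" and \<Gamma> \<Delta> \<Pi> \<Sigma> :: "('p,'a) fm fset"
  shows "gtpdl \<Gamma> (finsert (BoxC \<pi> (chi \<Pi> \<Sigma>)) \<Delta>)
     \<longleftrightarrow> gtpdl \<Pi> (finsert (Box \<pi> (chi \<Gamma> \<Delta>)) \<Sigma>)"
proof
  assume h: "gtpdl \<Gamma> (finsert (BoxC \<pi> (chi \<Pi> \<Sigma>)) \<Delta>)"
  have "gtpdl {||} {|chi \<Gamma> \<Delta>, BoxC \<pi> (chi \<Pi> \<Sigma>)|}" by (rule chiR[OF h])
  then have "gtpdl {||} (finsert (chi \<Gamma> \<Delta>) (BoxC \<pi> |`| {|chi \<Pi> \<Sigma>|}))" by simp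
  then have "gtpdl (Box \<pi> |`| {||}) (finsert (Box \<pi> (chi \<Gamma> \<Delta>)) {|chi \<Pi> \<Sigma>|})"
    by (rule BoxRule)
  then have a: "gtpdl \<Pi> (finsert (chi \<Pi> \<Sigma>) (finsert (Box \<pi> (chi \<Gamma> \<Delta>)) \<Sigma>))"
    by (rule wk) auto
  have b: "gtpdl (finsert (chi \<Pi> \<Sigma>) \<Pi>) (finsert (Box \<pi> (chi \<Gamma> \<Delta>)) \<Sigma>)"
    by (rule wk[OF chiL]) auto
  show "gtpdl \<Pi> (finsert (Box \<pi> (chi \<Gamma> \<Delta>)) \<Sigma>)" by (rule Cut[OF a b])
next
  assume h: "gtpdl \<Pi> (finsert (Box \<pi> (chi \<Gamma> \<Delta>)) \<Sigma>)"
  have "gtpdl {||} {|chi \<Pi> \<Sigma>, Box \<pi> (chi \<Gamma> \<Delta>)|}" by (rule chiR[OF h])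
  then have "gtpdl {||} (finsert (chi \<Pi> \<Sigma>) (Box \<pi> |`| {|chi \<Gamma> \<Delta>|}))" by simp
  then have "gtpdl (BoxC \<pi> |`| {||}) (finsert (BoxC \<pi> (chi \<Pi> \<Sigma>)) {|chi \<Gamma> \<Delta>|})"
    by (rule BoxCRule)
  then have a: "gtpdl \<Gamma> (finsert (chi \<Gamma> \<Delta>) (finsert (BoxC \<pi> (chi \<Pi> \<Sigma>)) \<Delta>))"
    by (rule wk) auto
  have b: "gtpdl (finsert (chi \<Gamma> \<Delta>) \<Gamma>) (finsert (BoxC \<pi> (chi \<Pi> \<Sigma>)) \<Delta>)"
    by (rule wk[OF chiL]) auto
  show "gtpdl \<Gamma> (finsert (BoxC \<pi> (chi \<Pi> \<Sigma>)) \<Delta>)" by (rule Cut[OF a b])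
qed

end
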